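(* Suppose $h(t)-g(t)>0$ for $t\in[\alpha,\beta]$, and that $$q(\vartheta)>\frac{g(\vartheta)-h(\vartheta)}2\quad\text{and}\quad r(\vartheta)<\frac{h(\vartheta)-g(\vartheta)}2\qquad\text{for all }\vartheta\in\Theta.$$ Then $\Phi$ is strictly decreasing on $(\alpha,\vartheta_0]$ and strictly increasing on $[\vartheta_0,\beta)$, so $\vartheta_0$ is its unique point of minimum on $\Theta$, and the pseudo-MLE $\hat\vartheta_\varepsilon$ is consistent: $\hat\vartheta_\varepsilon\to\vartheta_0$ in probability as $\varepsilon\to0$.
   Context: Fix $T>0$, $0<\alpha<\beta<T$, $\Theta=(\alpha,\beta)$, true value $\vartheta_0\in\Theta$, and continuous bounded functions $h,g,q,r$ on $[0,T]$. The observed process is $X_t=\int_0^tS(\vartheta_0,s)ds+\varepsilon W_t$, $0\le t\le T$, with $W$ a standard Wiener process and $S(\vartheta_0,t)=[h(t)+q(t)]\mathbf 1_{\{t<\vartheta_0\}}+[g(t)+r(t)]\mathbf 1_{\{t\ge\vartheta_0\}}$ ($q,r$ unknown to the statistician). The statistician uses the model ${\rm d}X_t=M(\vartheta,t){\rm d}t+\varepsilon{\rm d}W_t$ with $M(\vartheta,t)=h(t)\mathbf 1_{\{t<\vartheta\}}+g(t)\mathbf 1_{\{t\ge\vartheta\}}$, pseudo-likelihood $V(\vartheta,X^T)=\exp\{\varepsilon^{-2}\int_0^TM(\vartheta,t){\rm d}X_t-\frac1{2\varepsilon^2}\int_0^TM(\vartheta,t)^2{\rm d}t\}$, and pseudo-MLE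 $\hat\vartheta_\varepsilon$ a (measurable) maximizer of $V(\cdot,X^T)$ over $[\alpha,\beta]$. $\Phi(\vartheta)=\int_0^T[M(\vartheta,t)-S(\vartheta_0,t)]^2{\rm d}t$. *)

theory Defs
  imports "HOL-Probability.Probability"
begin

definition wiener_process :: "'a measure \<Rightarrow> real \<Rightarrow> (real \<Rightarrow> 'a \<Rightarrow> real) \<Rightarrow> bool" where
  "wiener_process P T W \<longleftrightarrow>
     prob_space P \<and>
     (\<forall>t\<in>{0..T}. W t \<in> borel_measurable P) \<and>
     (\<forall>\<omega>\<in>space P. W 0 \<omega> = 0) \<and>
     (\<forall>\<omega>\<in>space P. continuous_on {0..T} (\<lambda>t. W t \<omega>)) \<and>
     (\<forall>s t. 0 \<le> s \<and> s < t \<and> t \<le> T \<longrightarrow>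
        distributed P lborel (\<lambda>\<omega>. W t \<omega> - W s \<omega>)
          (\<lambda>x. ennreal (normal_density 0 (sqrt (t - s)) x))) \<and>
     (\<forall>(ts :: nat \<Rightarrow> real) n. 0 \<le> ts 0 \<and> ts n \<le> T \<and> (\<forall>i<n. ts i < ts (Suc i)) \<longrightarrow>
        prob_space.indep_vars P (\<lambda>_. borel) (\<lambda>i \<omega>. W (ts (Suc i)) \<omega> - W (ts i) \<omega>) {..<n})"

definition wiener_integral ::
  "'a measure \<Rightarrow> real \<Rightarrow> (real \<Rightarrow> 'a \<Rightarrow> real) \<Rightarrow> (real \<Rightarrow> real) \<Rightarrow> ('a \<Rightarrow> real) \<Rightarrow> bool" where
  "wiener_integral P T W f Y \<longleftrightarrow>
     Y \<in> borel_measurable P \<and>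
     (\<forall>e>0. ((\<lambda>n::nat. measure P {\<omega>\<in>space P.
          e < \<bar>(\<Sum>k<n. f (real k * T / real n) *
                 (W (real (Suc k) * T / real n) \<omega> - W (real k * T / real n) \<omega>)) - Y \<omega>\<bar>})
        \<longlonglongrightarrow> 0))"

definition Mtrend :: "(real \<Rightarrow> real) \<Rightarrow> (real \<Rightarrow> real) \<Rightarrow> real \<Rightarrow> real \<Rightarrow> real" where
  "Mtrend h g th t = (if t < th then h t else g t)"

definition Strend :: "(real \<Rightarrow> real) \<Rightarrow> (real \<Rightarrow> real) \<Rightarrow> (real \<Rightarrow> real) \<Rightarrow> (real \<Rightarrow> real)
    \<Rightarrow> real \<Rightarrow> real \<Rightarrow> real" where
  "Strend h g q r th0 t = (if t < th0 then h t + q t else g t + r t)"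

definition Phi :: "real \<Rightarrow> (real \<Rightarrow> real) \<Rightarrow> (real \<Rightarrow> real) \<Rightarrow> (real \<Rightarrow> real) \<Rightarrow> (real \<Rightarrow> real)
    \<Rightarrow> real \<Rightarrow> real \<Rightarrow> real" where
  "Phi T h g q r th0 th =
     integral {0..T} (\<lambda>t. (Mtrend h g th t - Strend h g q r th0 t)\<^sup>2)"

text \<open>Pseudo-likelihood V(th, X^T) for the observation X_t = \<integral>_0^t S ds + eps W_t, where
  \<open>\<integral>_0^T M(th,t) dX_t = \<integral>_0^T M(th,t) S(th0,t) dt + eps IW th\<close>
  and IW th is the Wiener integral \<open>\<integral>_0^T M(th,t) dW_t\<close>.\<close>
definition pseudo_lik :: "real \<Rightarrow> (real \<Rightarrow> real) \<Rightarrow> (real \<Rightarrow> real) \<Rightarrow> (real \<Rightarrow> real) \<Rightarrow> (real \<Rightarrow> real)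
    \<Rightarrow> real \<Rightarrow> (real \<Rightarrow> 'a \<Rightarrow> real) \<Rightarrow> real \<Rightarrow> real \<Rightarrow> 'a \<Rightarrow> real" where
  "pseudo_lik T h g q r th0 IW eps th \<omega> =
     exp ((1 / eps\<^sup>2) * (integral {0..T} (\<lambda>t. Mtrend h g th t * Strend h g q r th0 t) + eps * IW th \<omega>)
          - (1 / (2 * eps\<^sup>2)) * integral {0..T} (\<lambda>t. (Mtrend h g th t)\<^sup>2))"

end

theory Submission imports Defs begin

lemma pw3_int:
  fixes f u v w :: "real \<Rightarrow> real"
  assumes cu: "continuous_on {a..b} u" and cv: "continuous_on {a..b} v" and cw: "continuous_on {a..b} w"
    and le: "a \<le> cA" "cA \<le> cB" "cB \<le> b"
    and fu: "\<And>t. t \<in> {a..b} \<Longrightarrow> t < cA \<Longrightarrow> f t = u t"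
    and fv: "\<And>t. t \<in> {a..b} \<Longrightarrow> cA < t \<Longrightarrow> t < cB \<Longrightarrow> f t = v t"
    and fw: "\<And>t. t \<in> {a..b} \<Longrightarrow> cB < t \<Longrightarrow> f t = w t"
  shows "f integrable_on {a..b}"
proof -
  have 1: "f integrable_on {a..cA}"
    by (rule integrable_spike_finite[where S="{cA}" and f=u])
       (use le fu in \<open>auto intro!: integrable_continuous_interval continuous_on_subset[OF cu]\<close>)
  have 2: "f integrable_on {cA..cB}"
    by (rule integrable_spike_finite[where S="{cA,cB}" and f=v])
       (use le fv in \<open>auto intro!: integrable_continuous_interval continuous_on_subset[OF cv]\<close>)
  have 3: "f integrable_on {cB..b}"
    by (rule integrable_spike_finite[where S="{cB}" and f=w])
       (use le fw in \<open>auto intro!: integrable_continuous_interval continuous_on_subset[OF cw]\<close>)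
  have 4: "f integrable_on {a..cB}"
    by (rule Henstock_Kurzweil_Integration.integrable_combine[OF _ _ 1 2]) (use le in auto)
  show ?thesis
    by (rule Henstock_Kurzweil_Integration.integrable_combine[OF _ _ 4 3]) (use le in auto)
qed

lemma int_pos_strict:
  fixes G :: "real \<Rightarrow> real"
  assumes "continuous_on {x..y} G" "x < y" "\<And>t. t \<in> {x..y} \<Longrightarrow> 0 < G t"
  shows "0 < integral {x..y} G"
proof -
  obtain t0 where t0: "t0 \<in> {x..y}" "\<And>s. s \<in> {x..y} \<Longrightarrow> G t0 \<le> G s"
    using continuous_attains_inf[of "{x..y}" G] assms by auto
  have "integral {x..y} (\<lambda>t. G t0) \<le> integral {x..y} G"
    by (rule Henstock_Kurzweil_Integration.integral_le)
       (use assms t0 in \<open>auto intro: integrable_continuous_interval\<close>)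
  moreover have "integral {x..y} (\<lambda>t. G t0) = (y - x) * G t0" using assms by simp
  moreover have "0 < (y - x) * G t0" using assms t0 by simp
  ultimately show ?thesis by linarith
qed

lemma int_nonneg_open:
  fixes G :: "real \<Rightarrow> real"
  assumes "continuous_on {x..y} G" "\<And>t. t \<in> {x<..<y} \<Longrightarrow> 0 \<le> G t"
  shows "0 \<le> integral {x..y} G"
proof -
  have "integral {x..y} G = integral {x..y} (\<lambda>t. max (G t) 0)"
    by (rule integral_spike[of "{x,y}"]) (use assms in \<open>auto\<close>)
  also have "0 \<le> \<dots>"
    by (rule Henstock_Kurzweil_Integration.integral_nonneg)
       (use assms in \<open>auto intro!: integrable_continuous_interval continuous_intros\<close>)
  finally show ?thesis .
qed

lemma dense_rat_cont:
  fixes f :: "real \<Rightarrow> real"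
  assumes "\<alpha> < \<beta>" "continuous_on {\<alpha>..\<beta>} f" "\<theta> \<in> {\<alpha>..\<beta>}" "c < \<bar>f \<theta>\<bar>"
  shows "\<exists>d\<in>{\<alpha>..\<beta>} \<inter> \<rat>. c < \<bar>f d\<bar>"
proof -
  obtain e where e: "e > 0" "\<And>x'. x' \<in> {\<alpha>..\<beta>} \<Longrightarrow> dist x' \<theta> < e \<Longrightarrow> dist (f x') (f \<theta>) < \<bar>f \<theta>\<bar> - c"
    using assms(2,3,4) unfolding continuous_on_iff by (metis diff_gt_0_iff_gt)
  have "\<exists>r\<in>\<rat>. r \<in> {\<alpha>..\<beta>} \<and> dist r \<theta> < e"
  proof (cases "\<theta> < \<beta>")
    case True
    then obtain r where "r \<in> \<rat>" "\<theta> < r" "r < min (\<theta> + e) \<beta>"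
      using Rats_dense_in_real[of \<theta> "min (\<theta> + e) \<beta>"] e by auto
    then show ?thesis using assms(3) by (auto simp: dist_real_def intro!: bexI[of _ r])
  next
    case False
    then have "\<theta> = \<beta>" using assms(3) by auto
    then obtain r where "r \<in> \<rat>" "max (\<theta> - e) \<alpha> < r" "r < \<theta>"
      using Rats_dense_in_real[of "max (\<theta> - e) \<alpha>" \<theta>] e assms(1) by auto
    then show ?thesis using \<open>\<theta> = \<beta>\<close> by (auto simp: dist_real_def intro!: bexI[of _ r])
  qed
  then obtain r where r: "r \<in> \<rat>" "r \<in> {\<alpha>..\<beta>}" "dist r \<theta> < e" by blast
  then have "\<bar>f r - f \<theta>\<bar> < \<bar>f \<theta>\<bar> - c" using e(2) by (auto simp: dist_real_def)
  then have "c < \<bar>f r\<bar>" by linarith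
  then show ?thesis using r by auto
qed


theorem proposition2:
  fixes P :: "'a measure" and W :: "real \<Rightarrow> 'a \<Rightarrow> real"
    and T \<alpha> \<beta> th0 :: real and h g q r :: "real \<Rightarrow> real"
    and IW :: "real \<Rightarrow> 'a \<Rightarrow> real"
    and est :: "real \<Rightarrow> 'a \<Rightarrow> real"
  assumes "0 < \<alpha>" "\<alpha> < \<beta>" "\<beta> < T" "\<alpha> < th0" "th0 < \<beta>"
    and "continuous_on {0..T} h" "continuous_on {0..T} g"
    and "continuous_on {0..T} q" "continuous_on {0..T} r"
    and W: "wiener_process P T W"
    and IW: "\<forall>th\<in>{\<alpha>..\<beta>}. wiener_integral P T W (Mtrend h g th) (IW th)"
    and IW_cont: "\<forall>\<omega>\<in>space P. continuous_on {\<alpha>..\<beta>} (\<lambda>th. IW th \<omega>)"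
    and est_meas: "\<forall>eps>0. est eps \<in> borel_measurable P"
    and est_max: "\<forall>eps>0. \<forall>\<omega>\<in>space P. est eps \<omega> \<in> {\<alpha>..\<beta>} \<and>
        (\<forall>th\<in>{\<alpha>..\<beta>}. pseudo_lik T h g q r th0 IW eps th \<omega>
                        \<le> pseudo_lik T h g q r th0 IW eps (est eps \<omega>) \<omega>)"
    and hg: "\<forall>t\<in>{\<alpha>..\<beta>}. h t - g t > 0"
    and hq: "\<forall>th\<in>{\<alpha><..<\<beta>}. q th > (g th - h th) / 2"
    and hr: "\<forall>th\<in>{\<alpha><..<\<beta>}. r th < (h th - g th) / 2"
  shows "(\<forall>x y. \<alpha> < x \<and> x < y \<and> y \<le> th0 \<longrightarrow> Phi T h g q r th0 y < Phi T h g q r th0 x)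
       \<and> (\<forall>x y. th0 \<le> x \<and> x < y \<and> y < \<beta> \<longrightarrow> Phi T h g q r th0 x < Phi T h g q r th0 y)
       \<and> (\<forall>th\<in>{\<alpha><..<\<beta>}. th \<noteq> th0 \<longrightarrow> Phi T h g q r th0 th0 < Phi T h g q r th0 th)
       \<and> (\<forall>\<delta>>0. ((\<lambda>eps. measure P {\<omega>\<in>space P. \<delta> < \<bar>est eps \<omega> - th0\<bar>}) \<longlongrightarrow> 0) (at_right 0))"
proof -
  note cont = assms(6-9)
  note ord = assms(1-5)
  define F where "F = Phi T h g q r th0"
  define S where "S = Strend h g q r th0"
  define M where "M = Mtrend h g"
  have int_sq: "(\<lambda>t. (M th t - S t)^2) integrable_on {0..T}" if th: "th \<in> {0..T}" for th
  proof (cases "th \<le> th0")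
    case True
    show ?thesis
      by (rule pw3_int[where cA=th and cB=th0 and u="\<lambda>t. (h t - (h t + q t))^2"
            and v="\<lambda>t. (g t - (h t + q t))^2" and w = "\<lambda>t. (g t - (g t + r t))^2"])
        (use True th ord in \<open>auto simp: M_def S_def Mtrend_def Strend_def intro!: continuous_intros cont\<close>)
  next
    case False
    show ?thesis
      by (rule pw3_int[where cA=th0 and cB=th and u="\<lambda>t. (h t - (h t + q t))^2"
            and v="\<lambda>t. (h t - (g t + r t))^2" and w = "\<lambda>t. (g t - (g t + r t))^2"])
        (use False th ord in \<open>auto simp: M_def S_def Mtrend_def Strend_def intro!: continuous_intros cont\<close>)
  qed
  have int_MS: "(\<lambda>t. M th t * S t) integrable_on {0..T}" if th: "th \<in> {0..T}" for th
  proof (cases "th \<le> th0")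
    case True
    show ?thesis
      by (rule pw3_int[where cA=th and cB=th0 and u="\<lambda>t. h t * (h t + q t)"
            and v="\<lambda>t. g t * (h t + q t)" and w = "\<lambda>t. g t * (g t + r t)"])
        (use True th ord in \<open>auto simp: M_def S_def Mtrend_def Strend_def intro!: continuous_intros cont\<close>)
  next
    case False
    show ?thesis
      by (rule pw3_int[where cA=th0 and cB=th and u="\<lambda>t. h t * (h t + q t)"
            and v="\<lambda>t. h t * (g t + r t)" and w = "\<lambda>t. g t * (g t + r t)"])
        (use False th ord in \<open>auto simp: M_def S_def Mtrend_def Strend_def intro!: continuous_intros cont\<close>)
  qed
  have int_MM: "(\<lambda>t. (M th t)^2) integrable_on {0..T}" if th: "th \<in> {0..T}" for th
    by (rule pw3_int[where cA=th and cB=th and u="\<lambda>t. (h t)^2"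
            and v="\<lambda>t. (h t)^2" and w = "\<lambda>t. (g t)^2"])
        (use th ord in \<open>auto simp: M_def S_def Mtrend_def Strend_def intro!: continuous_intros cont\<close>)
  have int_SS: "(\<lambda>t. (S t)^2) integrable_on {0..T}"
    by (rule pw3_int[where cA=th0 and cB=th0 and u="\<lambda>t. (h t + q t)^2"
            and v="\<lambda>t. (h t + q t)^2" and w = "\<lambda>t. (g t + r t)^2"])
        (use ord in \<open>auto simp: M_def S_def Mtrend_def Strend_def intro!: continuous_intros cont\<close>)
  define CS where "CS = integral {0..T} (\<lambda>t. (S t)^2)"
  have phi_id: "2 * integral {0..T} (\<lambda>t. M th t * S t) - integral {0..T} (\<lambda>t. (M th t)^2) = CS - F th"
    if th: "th \<in> {0..T}" for th
  proof -
    have "F th = integral {0..T} (\<lambda>t. ((M th t)^2 - 2 * (M th t * S t)) + (S t)^2)"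
      unfolding F_def Phi_def M_def S_def
      by (rule Henstock_Kurzweil_Integration.integral_cong) (simp add: power2_eq_square algebra_simps)
    also have "\<dots> = integral {0..T} (\<lambda>t. (M th t)^2 - 2 * (M th t * S t)) + CS"
      unfolding CS_def
      by (rule integral_add) (use int_MM[OF th] int_MS[OF th] int_SS in \<open>auto intro!: integrable_diff integrable_on_mult_right\<close>)
    also have "integral {0..T} (\<lambda>t. (M th t)^2 - 2 * (M th t * S t)) =
        integral {0..T} (\<lambda>t. (M th t)^2) - 2 * integral {0..T} (\<lambda>t. M th t * S t)"
      using int_MM[OF th] int_MS[OF th] by (simp add: integral_diff integrable_on_mult_right)
    finally show ?thesis by linarith
  qed
  have cG: "continuous_on {0..T} (\<lambda>t. (g t - h t - q t)^2 - (q t)^2)"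
    by (intro continuous_intros cont)
  have cH: "continuous_on {0..T} (\<lambda>t. (h t - g t - r t)^2 - (r t)^2)"
    by (intro continuous_intros cont)
  have dec_eq: "F x - F y = integral {x..y} (\<lambda>t. (g t - h t - q t)^2 - (q t)^2)"
    if xy: "0 \<le> x" "x < y" "y \<le> th0" for x y
  proof -
    have "F x - F y = integral {0..T} (\<lambda>t. (M x t - S t)^2 - (M y t - S t)^2)"
      unfolding F_def Phi_def M_def[symmetric] S_def[symmetric]
      by (rule integral_diff[symmetric]) (use xy ord in \<open>auto intro!: int_sq\<close>)
    also have "\<dots> = integral {0..T} (\<lambda>t. if t \<in> {x..y} then (g t - h t - q t)^2 - (q t)^2 else 0)"
      by (rule integral_spike[of "{y}"]) (use xy in \<open>auto simp: M_def S_def Mtrend_def Strend_def power2_eq_square algebra_simps\<close>)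
    also have "\<dots> = integral {x..y} (\<lambda>t. (g t - h t - q t)^2 - (q t)^2)"
    proof -
      have "{x..y} \<inter> {0..T} = {x..y}" using xy ord by auto
      then show ?thesis by (simp only: Henstock_Kurzweil_Integration.integral_restrict_Int)
    qed
    finally show ?thesis .
  qed
  have inc_eq: "F y - F x = integral {x..y} (\<lambda>t. (h t - g t - r t)^2 - (r t)^2)"
    if xy: "th0 \<le> x" "x < y" "y \<le> T" for x y
  proof -
    have "F y - F x = integral {0..T} (\<lambda>t. (M y t - S t)^2 - (M x t - S t)^2)"
      unfolding F_def Phi_def M_def[symmetric] S_def[symmetric]
      by (rule integral_diff[symmetric]) (use xy ord in \<open>auto intro!: int_sq\<close>)
    also have "\<dots> = integral {0..T} (\<lambda>t. if t \<in> {x..y} then (h t - g t - r t)^2 - (r t)^2 else 0)"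
      by (rule integral_spike[of "{y}"]) (use xy in \<open>auto simp: M_def S_def Mtrend_def Strend_def power2_eq_square algebra_simps\<close>)
    also have "\<dots> = integral {x..y} (\<lambda>t. (h t - g t - r t)^2 - (r t)^2)"
    proof -
      have "{x..y} \<inter> {0..T} = {x..y}" using xy ord by auto
      then show ?thesis by (simp only: Henstock_Kurzweil_Integration.integral_restrict_Int)
    qed
    finally show ?thesis .
  qed
  have posG: "0 < (g t - h t - q t)^2 - (q t)^2" if t: "t \<in> {\<alpha><..<\<beta>}" for t
  proof -
    have "(g t - h t - q t)^2 - (q t)^2 = (h t - g t) * (h t - g t + 2 * q t)"
      by (simp add: power2_eq_square algebra_simps)
    moreover have "0 < h t - g t" using hg t by auto
    moreover have "0 < h t - g t + 2 * q t"
    proof -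
      have "q t > (g t - h t) / 2" using hq t by blast
      then show ?thesis by (simp add: field_simps)
    qed
    ultimately show ?thesis by simp
  qed
  have posH: "0 < (h t - g t - r t)^2 - (r t)^2" if t: "t \<in> {\<alpha><..<\<beta>}" for t
  proof -
    have "(h t - g t - r t)^2 - (r t)^2 = (h t - g t) * (h t - g t - 2 * r t)"
      by (simp add: power2_eq_square algebra_simps)
    moreover have "0 < h t - g t" using hg t by auto
    moreover have "0 < h t - g t - 2 * r t"
    proof -
      have "r t < (h t - g t) / 2" using hr t by blast
      then show ?thesis by (simp add: field_simps)
    qed
    ultimately show ?thesis by simp
  qed
  have C1: "\<forall>x y. \<alpha> < x \<and> x < y \<and> y \<le> th0 \<longrightarrow> F y < F x"
  proof (intro allI impI)
    fix x y assume xy: "\<alpha> < x \<and> x < y \<and> y \<le> th0"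
    have "0 < integral {x..y} (\<lambda>t. (g t - h t - q t)^2 - (q t)^2)"
      using xy ord by (intro int_pos_strict continuous_on_subset[OF cG] posG) auto
    then show "F y < F x" using dec_eq[of x y] xy ord by auto
  qed
  have C2: "\<forall>x y. th0 \<le> x \<and> x < y \<and> y < \<beta> \<longrightarrow> F x < F y"
  proof (intro allI impI)
    fix x y assume xy: "th0 \<le> x \<and> x < y \<and> y < \<beta>"
    have "0 < integral {x..y} (\<lambda>t. (h t - g t - r t)^2 - (r t)^2)"
      using xy ord by (intro int_pos_strict continuous_on_subset[OF cH] posH) auto
    then show "F x < F y" using inc_eq[of x y] xy ord by auto
  qed
  have C3: "\<forall>th\<in>{\<alpha><..<\<beta>}. th \<noteq> th0 \<longrightarrow> F th0 < F th"
  proof (intro ballI impI)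
    fix th assume th: "th \<in> {\<alpha><..<\<beta>}" "th \<noteq> th0"
    show "F th0 < F th"
    proof (cases "th < th0")
      case True then show ?thesis using C1 th by auto
    next
      case False then show ?thesis using C2 th by auto
    qed
  qed
  have C4: "((\<lambda>eps. measure P {\<omega>\<in>space P. \<delta> < \<bar>est eps \<omega> - th0\<bar>}) \<longlongrightarrow> 0) (at_right 0)"
    if \<delta>: "\<delta> > 0" for \<delta>
  proof -
    interpret ps: prob_space P using W unfolding wiener_process_def by auto
    have IWm: "IW th \<in> borel_measurable P" if "th \<in> {\<alpha>..\<beta>}" for th
      using IW that unfolding wiener_integral_def by auto
    define \<delta>0 where "\<delta>0 = min \<delta> (min ((th0 - \<alpha>) / 2) ((\<beta> - th0) / 2))"
    have d0: "0 < \<delta>0" "\<delta>0 \<le> \<delta>" "\<alpha> < th0 - \<delta>0" "th0 + \<delta>0 < \<beta>"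
      using \<delta> ord unfolding \<delta>0_def by (auto simp: min_def field_simps)
    define a where "a = th0 - \<delta>0"
    define b where "b = th0 + \<delta>0"
    define \<kappa> where "\<kappa> = min (F a - F th0) (F b - F th0)"
    have ka: "0 < F a - F th0" using C1 d0 unfolding a_def by auto
    have kb: "0 < F b - F th0" using C2 d0 unfolding b_def by auto
    have \<kappa>pos: "0 < \<kappa>" using ka kb unfolding \<kappa>_def by auto
    have gap: "\<kappa> \<le> F th - F th0" if th: "th \<in> {\<alpha>..\<beta>}" "\<delta> < \<bar>th - th0\<bar>" for th
    proof (cases "th < th0")
      case True
      then have tha: "th < a" using th d0 unfolding a_def by auto
      have "F a \<le> F th"
      proof (cases "th = \<alpha>")
        case True
        have "0 \<le> integral {\<alpha>..a} (\<lambda>t. (g t - h t - q t)^2 - (q t)^2)"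
          using d0 ord by (intro int_nonneg_open continuous_on_subset[OF cG] less_imp_le[OF posG]) (auto simp: a_def)
        then show ?thesis using dec_eq[of \<alpha> a] True tha ord d0 unfolding a_def by auto
      next
        case False
        then have "\<alpha> < th" using th by auto
        then have "F a < F th" using C1 tha d0 unfolding a_def by auto
        then show ?thesis by simp
      qed
      then show ?thesis using \<kappa>_def by auto
    next
      case False
      then have thb: "b < th" using th d0 unfolding b_def by auto
      have "F b \<le> F th"
      proof (cases "th = \<beta>")
        case True
        have "0 \<le> integral {b..\<beta>} (\<lambda>t. (h t - g t - r t)^2 - (r t)^2)"
          using d0 ord by (intro int_nonneg_open continuous_on_subset[OF cH] less_imp_le[OF posH]) (auto simp: b_def)
        then show ?thesis using inc_eq[of b \<beta>] True thb ord d0 unfolding b_def by auto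
      next
        case False
        then have "th < \<beta>" using th by auto
        then have "F b < F th" using C2 thb d0 unfolding b_def by auto
        then show ?thesis by simp
      qed
      then show ?thesis using \<kappa>_def by auto
    qed
    have lik_eq: "pseudo_lik T h g q r th0 IW e th \<omega> = exp ((CS - F th) / (2 * e^2) + IW th \<omega> / e)"
      if e: "0 < e" and th: "th \<in> {\<alpha>..\<beta>}" for e th \<omega>
    proof -
      have th': "th \<in> {0..T}" using th ord by auto
      define A where "A = integral {0..T} (\<lambda>t. M th t * S t)"
      define B where "B = integral {0..T} (\<lambda>t. (M th t)^2)"
      have AB: "2 * A - B = CS - F th" using phi_id[OF th'] unfolding A_def B_def .
      have "(1 / e^2) * (A + e * IW th \<omega>) - (1 / (2 * e^2)) * B = (2 * A - B) / (2 * e^2) + IW th \<omega> / e"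
        using e by (simp add: field_simps power2_eq_square)
      then show ?thesis unfolding pseudo_lik_def A_def B_def AB M_def S_def by (simp add: AB[unfolded A_def B_def M_def S_def])
    qed
    define Bs where "Bs N = {\<omega>\<in>space P. \<exists>d\<in>{\<alpha>..\<beta>} \<inter> \<rat>. real N < \<bar>IW d \<omega>\<bar>}" for N :: nat
    have incl: "{\<omega>\<in>space P. \<delta> < \<bar>est e \<omega> - th0\<bar>} \<subseteq> Bs N"
      if e: "0 < e" and N: "real N * (8 * e) \<le> \<kappa>" for e N
    proof
      fix \<omega> assume "\<omega> \<in> {\<omega>\<in>space P. \<delta> < \<bar>est e \<omega> - th0\<bar>}"
      then have \<omega>: "\<omega> \<in> space P" "\<delta> < \<bar>est e \<omega> - th0\<bar>" by auto
      define th1 where "th1 = est e \<omega>"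
      have th1: "th1 \<in> {\<alpha>..\<beta>}" using est_max e \<omega> unfolding th1_def by blast
      have th0in: "th0 \<in> {\<alpha>..\<beta>}" using ord by auto
      have "pseudo_lik T h g q r th0 IW e th0 \<omega> \<le> pseudo_lik T h g q r th0 IW e th1 \<omega>"
        using est_max e \<omega> th0in unfolding th1_def by blast
      then have le: "(CS - F th0) / (2 * e^2) + IW th0 \<omega> / e \<le> (CS - F th1) / (2 * e^2) + IW th1 \<omega> / e"
        using lik_eq[OF e th0in] lik_eq[OF e th1] by simp
      have eq: "(CS - F th1) / (2 * e^2) + IW th1 \<omega> / e - ((CS - F th0) / (2 * e^2) + IW th0 \<omega> / e)
          = ((F th0 - F th1) + 2 * e * (IW th1 \<omega> - IW th0 \<omega>)) / (2 * e^2)"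
        using e by (simp add: field_simps power2_eq_square)
      have "0 \<le> ((F th0 - F th1) + 2 * e * (IW th1 \<omega> - IW th0 \<omega>)) / (2 * e^2)"
        using le eq by linarith
      then have key: "F th1 - F th0 \<le> 2 * e * (IW th1 \<omega> - IW th0 \<omega>)"
        using e by (simp add: zero_le_divide_iff)
      have gp: "\<kappa> \<le> F th1 - F th0" using gap[OF th1] \<omega> unfolding th1_def by auto
      have "\<exists>th\<in>{\<alpha>..\<beta>}. real N < \<bar>IW th \<omega>\<bar>"
      proof (rule ccontr)
        assume "\<not> ?thesis"
        then have "\<bar>IW th1 \<omega>\<bar> \<le> real N" "\<bar>IW th0 \<omega>\<bar> \<le> real N" using th1 th0in by (meson not_less)+
        then have "IW th1 \<omega> - IW th0 \<omega> \<le> 2 * real N" by linarith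
        then have "2 * e * (IW th1 \<omega> - IW th0 \<omega>) \<le> 2 * e * (2 * real N)"
          using e by (intro mult_left_mono) auto
        moreover have "2 * e * (2 * real N) = (real N * (8 * e)) / 2" by simp
        ultimately show False using key gp N \<kappa>pos by linarith
      qed
      then obtain th where th: "th \<in> {\<alpha>..\<beta>}" "real N < \<bar>IW th \<omega>\<bar>" by blast
      have "\<exists>d\<in>{\<alpha>..\<beta>} \<inter> \<rat>. real N < \<bar>IW d \<omega>\<bar>"
        by (rule dense_rat_cont[where f="\<lambda>t. IW t \<omega>", OF _ _ th]) (use ord IW_cont \<omega> in auto)
      then show "\<omega> \<in> Bs N" unfolding Bs_def using \<omega> by auto
    qed
    have Bs_sets: "Bs N \<in> sets P" for N
      unfolding Bs_def
    proof (rule sets.sets_Collect_countable_Ex')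
      fix d assume d: "d \<in> {\<alpha>..\<beta>} \<inter> \<rat>"
      have "(\<lambda>\<omega>. \<bar>IW d \<omega>\<bar>) \<in> borel_measurable P"
        using IWm d by (intro borel_measurable_abs) auto
      then show "{\<omega> \<in> space P. real N < \<bar>IW d \<omega>\<bar>} \<in> sets P"
        unfolding borel_measurable_iff_greater by blast
    next
      show "countable ({\<alpha>..\<beta>} \<inter> \<rat>)" using countable_rat by auto
    qed
    have Bs_dec: "decseq Bs"
      unfolding decseq_def Bs_def by force
    have Bs_empty: "(\<Inter>N. Bs N) = {}"
    proof (rule ccontr)
      assume "(\<Inter>N. Bs N) \<noteq> {}"
      then obtain \<omega> where \<omega>: "\<And>N. \<omega> \<in> Bs N" by blast
      then have \<omega>s: "\<omega> \<in> space P" unfolding Bs_def by auto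
      obtain C where C: "\<And>th. th \<in> {\<alpha>..\<beta>} \<Longrightarrow> norm (IW th \<omega>) \<le> C"
      proof -
        have "continuous_on {\<alpha>..\<beta>} (\<lambda>th. IW th \<omega>)" using IW_cont \<omega>s by blast
        then show ?thesis using that continuous_on_compact_bound[OF compact_Icc] by metis
      qed
      obtain N :: nat where N: "C < real N" using reals_Archimedean2 by blast
      from \<omega>[of N] obtain d where "d \<in> {\<alpha>..\<beta>}" "real N < \<bar>IW d \<omega>\<bar>" unfolding Bs_def by auto
      then show False using C N by fastforce
    qed
    have lim: "(\<lambda>N. measure P (Bs N)) \<longlonglongrightarrow> 0"
      using ps.finite_Lim_measure_decseq[of Bs] Bs_sets Bs_dec Bs_empty by auto
    show ?thesis
    proof (rule order_tendstoI)
      fix c :: real assume "c < 0"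
      then show "\<forall>\<^sub>F e in at_right 0. c < measure P {\<omega>\<in>space P. \<delta> < \<bar>est e \<omega> - th0\<bar>}"
        by (intro always_eventually allI) (auto intro: less_le_trans[OF _ measure_nonneg])
    next
      fix c :: real assume c: "0 < c"
      obtain N where N: "measure P (Bs N) < c"
        using order_tendstoD(2)[OF lim c] unfolding eventually_sequentially by auto
      show "\<forall>\<^sub>F e in at_right 0. measure P {\<omega>\<in>space P. \<delta> < \<bar>est e \<omega> - th0\<bar>} < c"
        unfolding eventually_at_right_field
      proof (intro exI[of _ "\<kappa> / (8 * (real N + 1))"] conjI allI impI)
        show "0 < \<kappa> / (8 * (real N + 1))" using \<kappa>pos by auto
        fix e :: real assume e: "0 < e" "e < \<kappa> / (8 * (real N + 1))"
        then have "e * (8 * (real N + 1)) < \<kappa>" by (simp add: pos_less_divide_eq)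
        moreover have "real N * (8 * e) \<le> e * (8 * (real N + 1))" using e by (simp add: algebra_simps)
        ultimately have "real N * (8 * e) \<le> \<kappa>" by linarith
        then have "measure P {\<omega>\<in>space P. \<delta> < \<bar>est e \<omega> - th0\<bar>} \<le> measure P (Bs N)"
          by (intro ps.finite_measure_mono incl e Bs_sets)
        then show "measure P {\<omega>\<in>space P. \<delta> < \<bar>est e \<omega> - th0\<bar>} < c" using N by linarith
      qed
    qed
  qed
  show ?thesis using C1 C2 C3 C4 unfolding F_def by blast
qed

end
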